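(* In the model of the context with $p=1$ (and any $q\in[0,1]$) and $L\ge2$, let $\mathtt{P}^\ast\in(0,1)$ be a desired $L$-localizability probability. If $\mathtt{P_L}\ge\mathtt{P}^\ast$, then the processing gain satisfies $$\gamma\ge\beta\left(\left(1-(\mathtt{P}^\ast)^{\frac{1}{L-1}}\right)^{-\alpha/2}+L-2\right).$$
   Context: Model: Let $\Phi$ be a homogeneous Poisson point process on $\mathbb{R}^2$ of intensity $\lambda>0$ (base stations); the user is at the origin. Label the points in increasing distance as $x_1,x_2,\dots$. Fix an integer $L$, $\alpha>2$, $P>0$, $\sigma^2\ge0$, $\gamma>0$, $\beta>0$, $p,q\in[0,1]$. Independently of $\Phi$ and each other let $a_1,\dots,a_L$ be Bernoulli($p$) and $b_{L+1},b_{L+2},\dots$ be Bernoulli($q$). For $k\le L$, $$\mathsf{SINR}_k(L)=\frac{P\|x_k\|^{-\alpha}}{\sum_{i=1,i\ne k}^{L}a_iP\|x_i\|^{-\alpha}+\sum_{j=L+1}^\infty b_jP\|x_j\|^{-\alpha}+\sigma^2},$$ and $\mathtt{P_L}=\mathbb{E}\left[\prod_{k=1}^L\mathbb{1}(\mathsf{SINR}_k(L)\ge\beta/\gamma)\right]$. *)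

theory Defs
  imports "HOL-Probability.Probability"
begin

definition pcount :: "(real^2) set \<Rightarrow> (real^2) set \<Rightarrow> nat" where
  "pcount S B = card (S \<inter> B)"

definition PPP :: "'w measure \<Rightarrow> ('w \<Rightarrow> (real^2) set) \<Rightarrow> real \<Rightarrow> bool" where
  "PPP M Phi lam \<longleftrightarrow>
     (\<forall>B. B \<in> sets borel \<and> bounded B \<longrightarrow>
        (\<forall>\<omega>\<in>space M. finite (Phi \<omega> \<inter> B)) \<and>
        (\<forall>n::nat. {\<omega>\<in>space M. pcount (Phi \<omega>) B = n} \<in> sets M \<and>
           measure M {\<omega>\<in>space M. pcount (Phi \<omega>) B = n}
             = (lam * measure lborel B) ^ n / fact n * exp (- lam * measure lborel B))) \<and>
     (\<forall>(I::nat set) Bs. finite I \<longrightarrow> disjoint_family_on Bs I \<longrightarrow>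
        (\<forall>i\<in>I. Bs i \<in> sets borel \<and> bounded (Bs i)) \<longrightarrow>
        prob_space.indep_vars M (\<lambda>_. count_space UNIV) (\<lambda>i \<omega>. pcount (Phi \<omega>) (Bs i)) I)"

definition phi_sigma :: "'w measure \<Rightarrow> ('w \<Rightarrow> (real^2) set) \<Rightarrow> 'w set set" where
  "phi_sigma M Phi = sigma_sets (space M)
     {{\<omega>\<in>space M. pcount (Phi \<omega>) B = n} | B n. B \<in> sets borel \<and> bounded B}"

definition ordered_labelling :: "(real^2) set \<Rightarrow> (nat \<Rightarrow> real^2) \<Rightarrow> bool" where
  "ordered_labelling S xs \<longleftrightarrow> inj_on xs {1..} \<and> S = xs ` {1..} \<and>
     (\<forall>i j. 1 \<le> i \<longrightarrow> i \<le> j \<longrightarrow> norm (xs i) \<le> norm (xs j))"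

definition sinr :: "real \<Rightarrow> real \<Rightarrow> real \<Rightarrow> nat \<Rightarrow> (nat \<Rightarrow> real^2) \<Rightarrow> (nat \<Rightarrow> bool)
    \<Rightarrow> (nat \<Rightarrow> bool) \<Rightarrow> nat \<Rightarrow> real" where
  "sinr P \<alpha> \<sigma>2 L xs as bs k =
     P * norm (xs k) powr (-\<alpha>) /
     ((\<Sum>i\<in>{1..L} - {k}. of_bool (as i) * P * norm (xs i) powr (-\<alpha>))
      + (\<Sum>j. of_bool (bs (j + L + 1)) * P * norm (xs (j + L + 1)) powr (-\<alpha>))
      + \<sigma>2)"

definition PL :: "'w measure \<Rightarrow> (nat \<Rightarrow> 'w \<Rightarrow> real^2) \<Rightarrow> (nat \<Rightarrow> 'w \<Rightarrow> bool) \<Rightarrow> (nat \<Rightarrow> 'w \<Rightarrow> bool)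
    \<Rightarrow> real \<Rightarrow> real \<Rightarrow> real \<Rightarrow> real \<Rightarrow> real \<Rightarrow> nat \<Rightarrow> real" where
  "PL M x a b P \<alpha> \<sigma>2 \<gamma> \<beta> L =
     prob_space.expectation M (\<lambda>\<omega>. \<Prod>k\<in>{1..L}.
        of_bool (sinr P \<alpha> \<sigma>2 L (\<lambda>i. x i \<omega>) (\<lambda>i. a i \<omega>) (\<lambda>j. b j \<omega>) k \<ge> \<beta> / \<gamma>))"

end

theory Submission
  imports Defs "HOL-Real_Asymp.Real_Asymp"
begin


context prob_space
begin

lemma ppp_count:
  assumes "PPP M Phi lam" "B \<in> sets borel" "bounded B"
  shows "{\<omega>\<in>space M. pcount (Phi \<omega>) B = n} \<in> events"
    and "prob {\<omega>\<in>space M. pcount (Phi \<omega>) B = n} = (lam * measure lborel B)^n / fact n * exp(-lam*measure lborel B)"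
    and "\<omega> \<in> space M \<Longrightarrow> finite (Phi \<omega> \<inter> B)"
  using assms unfolding PPP_def by auto

lemma ppp_count_in:
  assumes "PPP M Phi lam" "B \<in> sets borel" "bounded B"
  shows "{\<omega>\<in>space M. pcount (Phi \<omega>) B \<in> S} \<in> events"
proof -
  have "{\<omega>\<in>space M. pcount (Phi \<omega>) B \<in> S} = (\<Union>n\<in>S. {\<omega>\<in>space M. pcount (Phi \<omega>) B = n})" by auto
  also have "\<dots> \<in> events" using ppp_count(1)[OF assms] by (intro sets.countable_UN') auto
  finally show ?thesis .
qed

lemma ppp_indep3:
  assumes P: "PPP M Phi lam" and B: "\<And>B. B \<in> {B0,B1,B2} \<Longrightarrow> B \<in> sets borel \<and> bounded B"
    and d: "B0 \<inter> B1 = {}" "B0 \<inter> B2 = {}" "B1 \<inter> B2 = {}"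
  shows "prob {\<omega>\<in>space M. pcount (Phi \<omega>) B0 \<in> S0 \<and> pcount (Phi \<omega>) B1 \<in> S1 \<and> pcount (Phi \<omega>) B2 \<in> S2}
     = prob {\<omega>\<in>space M. pcount (Phi \<omega>) B0 \<in> S0} * prob {\<omega>\<in>space M. pcount (Phi \<omega>) B1 \<in> S1}
       * prob {\<omega>\<in>space M. pcount (Phi \<omega>) B2 \<in> S2}"
proof -
  define Bs where "Bs = (\<lambda>i::nat. if i = 0 then B0 else if i = 1 then B1 else B2)"
  define A where "A = (\<lambda>i::nat. if i = 0 then S0 else if i = 1 then S1 else S2)"
  have "disjoint_family_on Bs {0,1,2}" using d unfolding disjoint_family_on_def Bs_def by auto
  moreover have "\<forall>i\<in>{0,1,2}. Bs i \<in> sets borel \<and> bounded (Bs i)" using B unfolding Bs_def by auto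
  moreover have H: "\<forall>(I::nat set) Bs. finite I \<longrightarrow> disjoint_family_on Bs I \<longrightarrow>
        (\<forall>i\<in>I. Bs i \<in> sets borel \<and> bounded (Bs i)) \<longrightarrow>
        indep_vars (\<lambda>_. count_space UNIV) (\<lambda>i \<omega>. pcount (Phi \<omega>) (Bs i)) I"
    using P unfolding PPP_def by (rule conjunct2)
  ultimately have I: "indep_vars (\<lambda>_. count_space UNIV) (\<lambda>i \<omega>. pcount (Phi \<omega>) (Bs i)) {0,1,2}"
    by simp
  have "prob (\<Inter>i\<in>{0,1,2}. (\<lambda>\<omega>. pcount (Phi \<omega>) (Bs i)) -` A i \<inter> space M)
     = (\<Prod>i\<in>{0,1,2}. prob ((\<lambda>\<omega>. pcount (Phi \<omega>) (Bs i)) -` A i \<inter> space M))"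
    by (rule indep_varsD_finite[OF I]) auto
  moreover have "(\<Inter>i\<in>{0,1,2}. (\<lambda>\<omega>. pcount (Phi \<omega>) (Bs i)) -` A i \<inter> space M)
     = {\<omega>\<in>space M. pcount (Phi \<omega>) B0 \<in> S0 \<and> pcount (Phi \<omega>) B1 \<in> S1 \<and> pcount (Phi \<omega>) B2 \<in> S2}"
    unfolding Bs_def A_def by auto
  moreover have "\<And>i B S. (\<lambda>\<omega>. pcount (Phi \<omega>) B) -` S \<inter> space M = {\<omega>\<in>space M. pcount (Phi \<omega>) B \<in> S}" by auto
  ultimately show ?thesis unfolding Bs_def A_def by (simp add: mult.assoc)
qed

end



definition rad :: "real \<Rightarrow> real \<Rightarrow> real" where "rad lam u = sqrt (u / (lam * pi))"
definition pois :: "real \<Rightarrow> nat \<Rightarrow> real" where "pois mu k = mu ^ k / fact k * exp (- mu)"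

lemma vol_ball: "r \<ge> 0 \<Longrightarrow> measure lborel (ball (0::real^2) r) = pi * r^2"
  using circle_area[of r 0] by simp

lemma vol_annulus:
  assumes "0 \<le> r1" "r1 \<le> r2"
  shows "measure lborel (ball (0::real^2) r2 - ball 0 r1) = pi * r2^2 - pi * r1^2"
proof -
  have "measure lborel (ball (0::real^2) r2 - ball 0 r1) = measure lborel (ball (0::real^2) r2) - measure lborel (ball (0::real^2) r1)"
    using assms emeasure_lborel_ball_finite[of "0::real^2" r2] by (intro measure_Diff) auto
  then show ?thesis using assms vol_ball by simp
qed

lemma rad_sq: "lam > 0 \<Longrightarrow> u \<ge> 0 \<Longrightarrow> (rad lam u)^2 = u / (lam * pi)"
  unfolding rad_def by simp

lemma rad_nonneg: "lam > 0 \<Longrightarrow> u \<ge> 0 \<Longrightarrow> rad lam u \<ge> 0"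
  unfolding rad_def by simp

lemma rad_mono: "lam > 0 \<Longrightarrow> u \<le> v \<Longrightarrow> rad lam u \<le> rad lam v"
  unfolding rad_def by (intro real_sqrt_le_mono divide_right_mono) auto

lemma lam_vol_rad: "lam > 0 \<Longrightarrow> u \<ge> 0 \<Longrightarrow> lam * measure lborel (ball (0::real^2) (rad lam u)) = u"
  by (simp add: vol_ball rad_nonneg rad_sq)

lemma lam_vol_ann: "lam > 0 \<Longrightarrow> 0 \<le> u \<Longrightarrow> u \<le> v \<Longrightarrow>
   lam * measure lborel (ball (0::real^2) (rad lam v) - ball 0 (rad lam u)) = v - u"
  by (simp add: vol_annulus rad_nonneg rad_sq rad_mono right_diff_distrib)

lemma ball_bb: "ball (0::real^2) r \<in> sets borel \<and> bounded (ball (0::real^2) r)"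
  by auto

lemma ann_bb: "ball (0::real^2) r - ball 0 r' \<in> sets borel \<and> bounded (ball (0::real^2) r - ball 0 r')"
  by auto

locale ppp = prob_space M for M :: "'w measure" +
  fixes Phi :: "'w \<Rightarrow> (real^2) set" and lam :: real
  assumes PPP: "PPP M Phi lam" and lam_pos: "lam > 0"
begin

abbreviation "evt B S \<equiv> {\<omega>\<in>space M. pcount (Phi \<omega>) B \<in> S}"

lemma ev_sets: "B \<in> sets borel \<Longrightarrow> bounded B \<Longrightarrow> evt B S \<in> events"
  by (rule ppp_count_in[OF PPP])

lemma ev_single: "B \<in> sets borel \<Longrightarrow> bounded B \<Longrightarrow> prob (evt B {k}) = pois (lam * measure lborel B) k"
  using ppp_count(2)[OF PPP, of B k] by (simp add: pois_def)

lemma ev_ge1: assumes "B \<in> sets borel" "bounded B"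
  shows "prob (evt B {1..}) = 1 - exp (- (lam * measure lborel B))"
proof -
  have "evt B {1..} = space M - evt B {0}" by auto
  then show ?thesis using prob_compl[OF ev_sets[OF assms, of "{0}"]] ev_single[OF assms, of 0]
    by (simp add: pois_def)
qed

lemma ev_ge2: assumes "B \<in> sets borel" "bounded B"
  shows "prob (evt B {2..}) = 1 - exp (- (lam * measure lborel B)) - (lam * measure lborel B) * exp (- (lam * measure lborel B))"
proof -
  have e: "evt B {2..} = space M - (evt B {0} \<union> evt B {1})" by auto
  have "prob (evt B {0} \<union> evt B {1}) = prob (evt B {0}) + prob (evt B {1})"
    by (intro finite_measure_Union ev_sets assms) auto
  moreover have "evt B {0} \<union> evt B {1} \<in> events" by (intro sets.Un ev_sets assms)
  ultimately show ?thesis unfolding e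
    using prob_compl[of "evt B {0} \<union> evt B {1}"] ev_single[OF assms, of 0] ev_single[OF assms, of 1]
    by (simp add: pois_def)
qed

lemma cnt_finite: "\<omega> \<in> space M \<Longrightarrow> B \<in> sets borel \<Longrightarrow> bounded B \<Longrightarrow> finite (Phi \<omega> \<inter> B)"
  by (rule ppp_count(3)[OF PPP])

end



lemma card_split:
  assumes "A \<subseteq> C" "finite (S \<inter> C)"
  shows "card (S \<inter> C) = card (S \<inter> A) + card (S \<inter> (C - A))"
proof -
  have "S \<inter> C = (S \<inter> A) \<union> (S \<inter> (C - A))" using assms by auto
  moreover have "finite (S \<inter> A)" by (rule finite_subset[OF _ assms(2)]) (use assms(1) in blast)
  moreover have "finite (S \<inter> (C - A))" by (rule finite_subset[OF _ assms(2)]) blast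
  ultimately show ?thesis by (metis card_Un_disjoint Diff_disjoint inf_assoc inf_left_commute inf_bot_right Int_Diff)
qed

lemma ol_norm_ge1:
  assumes "ordered_labelling S xs" "y \<in> S" shows "norm (xs 1) \<le> norm y"
  using assms unfolding ordered_labelling_def by auto

lemma ol_count_ge:
  assumes "ordered_labelling S xs" "L \<ge> 1" "norm (xs L) < r" "finite (S \<inter> ball 0 r)"
  shows "L \<le> card (S \<inter> ball 0 r)"
proof -
  have inj: "inj_on xs {1..L}" using assms(1) unfolding ordered_labelling_def
    by (auto intro: inj_on_subset)
  have "xs ` {1..L} \<subseteq> S \<inter> ball 0 r"
  proof
    fix y assume "y \<in> xs ` {1..L}"
    then obtain j where j: "1 \<le> j" "j \<le> L" "y = xs j" by auto
    have "norm (xs j) \<le> norm (xs L)" using assms(1) j unfolding ordered_labelling_def by auto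
    then have "norm y < r" using assms(3) j by simp
    moreover have "y \<in> S" using assms(1) j unfolding ordered_labelling_def by auto
    ultimately show "y \<in> S \<inter> ball 0 r" by (simp add: dist_norm)
  qed
  then have "card (xs ` {1..L}) \<le> card (S \<inter> ball 0 r)" using assms(4) by (rule card_mono[rotated])
  then show ?thesis using card_image[OF inj] by simp
qed

lemma ol_count_le:
  assumes "ordered_labelling S xs" "L \<ge> 1" "r \<le> norm (xs L)"
  shows "card (S \<inter> ball 0 r) \<le> L - 1"
proof -
  have "S \<inter> ball 0 r \<subseteq> xs ` {1..<L}"
  proof
    fix y assume y: "y \<in> S \<inter> ball 0 r"
    then obtain j where j: "1 \<le> j" "y = xs j" using assms(1) unfolding ordered_labelling_def by auto
    have "j < L"
    proof (rule ccontr)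
      assume "\<not> j < L"
      then have "norm (xs L) \<le> norm (xs j)" using assms(1,2) unfolding ordered_labelling_def by auto
      then show False using y j assms(3) by auto
    qed
    then show "y \<in> xs ` {1..<L}" using j by auto
  qed
  then have "card (S \<inter> ball 0 r) \<le> card (xs ` {1..<L})" by (rule card_mono[rotated]) auto
  also have "\<dots> \<le> card {1..<L}" by (rule card_image_le) auto
  finally show ?thesis by simp
qed

lemma rad_less: "lam > 0 \<Longrightarrow> u < v \<Longrightarrow> rad lam u < rad lam v"
  unfolding rad_def by (intro real_sqrt_less_mono divide_strict_right_mono) auto

lemma pois_split: "u \<ge> 0 \<Longrightarrow> pois (s*u) 0 * pois (u - s*u) n = (1-s)^n * pois u n"
proof -
  have "u - s*u = (1-s)*u" by (simp add: algebra_simps)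
  moreover have "exp (- (s*u)) * exp (- ((1-s)*u)) = exp (-u)" by (simp add: exp_add[symmetric] algebra_simps)
  ultimately show ?thesis unfolding pois_def by (simp add: power_mult_distrib)
qed




context ppp
begin

lemma key_bound:
  fixes x :: "nat \<Rightarrow> 'w \<Rightarrow> real^2" and L :: nat and s h :: real
  assumes L2: "L \<ge> 2" and s0: "0 < s" and s1: "s < 1" and h0: "h > 0"
    and xm: "\<And>k. x k \<in> borel_measurable M"
    and ae: "AE \<omega> in M. ordered_labelling (Phi \<omega>) (\<lambda>k. x k \<omega>)"
  shows "prob {\<omega>\<in>space M. s * norm (x L \<omega>)^2 \<le> norm (x 1 \<omega>)^2}
         \<le> (1-s)^(L-1) + (1 - exp (-h) - h * exp (-h)) / (1 - exp (-(s*h)))"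
proof -
  define n where "n = L - 1"
  have nL: "L = n + 1" using L2 unfolding n_def by simp
  define \<rho> where "\<rho> m = rad lam (real m * h)" for m :: nat
  define \<sigma> where "\<sigma> m = rad lam (s * (real m * h))" for m :: nat
  define Bm where "Bm m = ball (0::real^2) (\<rho> m)" for m
  define B1 where "B1 m = ball (0::real^2) (\<sigma> m)" for m
  define B2 where "B2 m = Bm m - B1 m" for m
  define B3 where "B3 m = Bm (Suc m) - Bm m" for m
  define G where "G m = evt (B1 m) {0} \<inter> evt (Bm m) {..n} \<inter> evt (Bm (Suc m)) {n+1..}" for m
  define D where "D m = evt (Bm m) {..n} \<inter> evt (Bm (Suc m)) {n+1..}" for m
  define g where "g = 1 - exp (-h) - h * exp (-h)"
  define q where "q = exp (-(s*h))"
  have bb: "Bm m \<in> sets borel \<and> bounded (Bm m)" "B1 m \<in> sets borel \<and> bounded (B1 m)"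
    "B2 m \<in> sets borel \<and> bounded (B2 m)" "B3 m \<in> sets borel \<and> bounded (B3 m)" for m
    unfolding Bm_def B1_def B2_def B3_def by auto
  have \<sigma>\<rho>: "\<sigma> m \<le> \<rho> m" for m
    unfolding \<sigma>_def \<rho>_def using s0 s1 h0 lam_pos by (intro rad_mono) (auto intro!: mult_left_le_one_le)
  have \<rho>mono: "\<rho> m \<le> \<rho> (Suc m)" for m
    unfolding \<rho>_def using h0 lam_pos by (intro rad_mono) (auto simp: distrib_right)
  have B1sub: "B1 m \<subseteq> Bm m" for m unfolding B1_def Bm_def using \<sigma>\<rho>[of m] by auto
  have Bmsub: "Bm m \<subseteq> Bm (Suc m)" for m unfolding Bm_def using \<rho>mono[of m] by auto
  have volB1: "lam * measure lborel (B1 m) = s * (real m * h)" for m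
    unfolding B1_def \<sigma>_def using s0 h0 lam_pos by (intro lam_vol_rad) auto
  have volBm: "lam * measure lborel (Bm m) = real m * h" for m
    unfolding Bm_def \<rho>_def using s0 h0 lam_pos by (intro lam_vol_rad) auto
  have volB2: "lam * measure lborel (B2 m) = real m * h - s * (real m * h)" for m
    unfolding B2_def Bm_def B1_def \<sigma>_def \<rho>_def using s0 s1 h0 lam_pos
    by (intro lam_vol_ann) (auto intro!: mult_left_le_one_le)
  have volB3: "lam * measure lborel (B3 m) = h" for m
  proof -
    have "lam * measure lborel (B3 m) = real (Suc m) * h - real m * h"
      unfolding B3_def Bm_def \<rho>_def using h0 lam_pos by (intro lam_vol_ann) auto
    then show ?thesis by (simp add: distrib_right)
  qed
  have Gsets: "G m \<in> events" for m unfolding G_def using bb by (intro sets.Int ev_sets) auto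
  have Dsets: "D m \<in> events" for m unfolding D_def using bb by (intro sets.Int ev_sets) auto
  define T1 where "T1 m = {\<omega>\<in>space M. pcount (Phi \<omega>) (B1 m) \<in> {0} \<and> pcount (Phi \<omega>) (B2 m) \<in> {n} \<and> pcount (Phi \<omega>) (B3 m) \<in> {1..}}" for m
  define T2 where "T2 m = {\<omega>\<in>space M. pcount (Phi \<omega>) (B1 m) \<in> {0} \<and> pcount (Phi \<omega>) (B2 m) \<in> UNIV \<and> pcount (Phi \<omega>) (B3 m) \<in> {2..}}" for m
  define T3 where "T3 m = {\<omega>\<in>space M. pcount (Phi \<omega>) (Bm m) \<in> {n} \<and> pcount (Phi \<omega>) (B3 m) \<in> {1..} \<and> pcount (Phi \<omega>) {} \<in> UNIV}" for m
  have d12: "B1 m \<inter> B2 m = {}" "B1 m \<inter> B3 m = {}" "B2 m \<inter> B3 m = {}" "Bm m \<inter> B3 m = {}" for m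
    unfolding B2_def B3_def using B1sub by auto
  have T1p: "prob (T1 m) = (1-s)^n * (pois (real m * h) n * (1 - exp (-h)))" for m
  proof -
    have "prob (T1 m) = prob (evt (B1 m) {0}) * prob (evt (B2 m) {n}) * prob (evt (B3 m) {1..})"
      unfolding T1_def by (rule ppp_indep3[OF PPP]) (use bb d12 in auto)
    also have "\<dots> = pois (s * (real m * h)) 0 * pois (real m * h - s * (real m * h)) n * (1 - exp (-h))"
    proof -
      have a: "prob (evt (B1 m) {0}) = pois (s * (real m * h)) 0" using ev_single[of "B1 m" 0] bb volB1 by simp
      have b: "prob (evt (B2 m) {n}) = pois (real m * h - s * (real m * h)) n" using ev_single[of "B2 m" n] bb volB2 by simp
      have c: "prob (evt (B3 m) {1..}) = 1 - exp (-h)" using ev_ge1[of "B3 m"] bb volB3 by simp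
      show ?thesis by (simp only: a b c)
    qed
    also have "\<dots> = (1-s)^n * (pois (real m * h) n * (1 - exp (-h)))"
      using pois_split[of "real m * h" s n] h0 by simp
    finally show ?thesis .
  qed
  have T2p: "prob (T2 m) = q ^ m * g" for m
  proof -
    have "prob (T2 m) = prob (evt (B1 m) {0}) * prob (evt (B2 m) UNIV) * prob (evt (B3 m) {2..})"
      unfolding T2_def by (rule ppp_indep3[OF PPP]) (use bb d12 in auto)
    also have "\<dots> = exp (- (s * (real m * h))) * g"
    proof -
      have a: "prob (evt (B1 m) {0}) = exp (- (s * (real m * h)))" using ev_single[of "B1 m" 0] bb volB1 by (simp add: pois_def)
      have b: "prob (evt (B2 m) UNIV) = 1" by (simp add: prob_space)
      have c: "prob (evt (B3 m) {2..}) = g" using ev_ge2[of "B3 m"] bb volB3 by (simp add: g_def)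
      show ?thesis by (simp only: a b c mult_1_right)
    qed
    also have "exp (- (s * (real m * h))) = q ^ m"
      unfolding q_def by (simp add: exp_of_nat_mult[symmetric] algebra_simps)
    finally show ?thesis .
  qed
  have T3p: "prob (T3 m) = pois (real m * h) n * (1 - exp (-h))" for m
  proof -
    have "prob (T3 m) = prob (evt (Bm m) {n}) * prob (evt (B3 m) {1..}) * prob (evt {} UNIV)"
      unfolding T3_def by (rule ppp_indep3[OF PPP]) (use bb d12 in auto)
    moreover have a: "prob (evt (Bm m) {n}) = pois (real m * h) n" using ev_single[of "Bm m" n] bb volBm by simp
    moreover have c: "prob (evt (B3 m) {1..}) = 1 - exp (-h)" using ev_ge1[of "B3 m"] bb volB3 by simp
    moreover have b: "prob (evt {} UNIV) = 1" by (simp add: prob_space)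
    ultimately show ?thesis by simp
  qed
  have cnt_add: "pcount (Phi \<omega>) (Bm (Suc m)) = pcount (Phi \<omega>) (Bm m) + pcount (Phi \<omega>) (B3 m)"
     "pcount (Phi \<omega>) (Bm m) = pcount (Phi \<omega>) (B1 m) + pcount (Phi \<omega>) (B2 m)"
    if "\<omega> \<in> space M" for \<omega> m
  proof -
    have f: "finite (Phi \<omega> \<inter> Bm k)" for k using cnt_finite[OF that] bb by auto
    show "pcount (Phi \<omega>) (Bm (Suc m)) = pcount (Phi \<omega>) (Bm m) + pcount (Phi \<omega>) (B3 m)"
      unfolding pcount_def B3_def by (rule card_split[OF Bmsub f])
    show "pcount (Phi \<omega>) (Bm m) = pcount (Phi \<omega>) (B1 m) + pcount (Phi \<omega>) (B2 m)"
      unfolding pcount_def B2_def by (rule card_split[OF B1sub f])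
  qed
  have T1sets: "T1 m \<in> events" for m
  proof -
    have "T1 m = evt (B1 m) {0} \<inter> evt (B2 m) {n} \<inter> evt (B3 m) {1..}" unfolding T1_def by blast
    then show ?thesis using bb by (simp only:) (intro sets.Int ev_sets; simp)
  qed
  have T2sets: "T2 m \<in> events" for m
  proof -
    have "T2 m = evt (B1 m) {0} \<inter> evt (B3 m) {2..}" unfolding T2_def by blast
    then show ?thesis using bb by (simp only:) (intro sets.Int ev_sets; simp)
  qed
  have GT: "G m \<subseteq> T1 m \<union> T2 m" for m
  proof
    fix \<omega> assume "\<omega> \<in> G m"
    then have w: "\<omega> \<in> space M" "pcount (Phi \<omega>) (B1 m) = 0" "pcount (Phi \<omega>) (Bm m) \<le> n"
      "n + 1 \<le> pcount (Phi \<omega>) (Bm (Suc m))" unfolding G_def by auto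
    show "\<omega> \<in> T1 m \<union> T2 m" using w cnt_add[OF w(1), of m] unfolding T1_def T2_def by auto
  qed
  have T3D: "T3 m \<subseteq> D m" for m
    unfolding T3_def D_def using cnt_add by auto
  have Gp: "prob (G m) \<le> (1-s)^n * prob (D m) + q^m * g" for m
  proof -
    have "prob (G m) \<le> prob (T1 m \<union> T2 m)"
      using GT T1sets T2sets by (intro finite_measure_mono) auto
    also have "\<dots> \<le> prob (T1 m) + prob (T2 m)" by (rule measure_Un_le) (use T1sets T2sets in auto)
    also have "prob (T1 m) \<le> (1-s)^n * prob (D m)"
    proof -
      have "prob (T3 m) \<le> prob (D m)" using T3D Dsets by (rule finite_measure_mono)
      then show ?thesis using T1p T3p s1 by (simp add: mult_left_mono)
    qed
    finally show ?thesis using T2p by simp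
  qed
  have Dmono: "pcount (Phi \<omega>) (Bm i) \<le> pcount (Phi \<omega>) (Bm j)" if "\<omega> \<in> space M" "i \<le> j" for \<omega> i j
    using that(2)
  proof (induction j)
    case 0 then show ?case by simp
  next
    case (Suc j) then show ?case using cnt_add(1)[OF that(1), of j] by (cases "i = Suc j") auto
  qed
  have disjD: "disjoint_family D"
    unfolding disjoint_family_on_def
  proof (intro ballI impI)
    fix i j :: nat assume "i \<noteq> j"
    have "D i \<inter> D j = {}" if "i < j" for i j
    proof -
      { fix \<omega> assume "\<omega> \<in> D i" "\<omega> \<in> D j"
        then have "\<omega> \<in> space M" "n+1 \<le> pcount (Phi \<omega>) (Bm (Suc i))" "pcount (Phi \<omega>) (Bm j) \<le> n"
          unfolding D_def by auto
        moreover have "pcount (Phi \<omega>) (Bm (Suc i)) \<le> pcount (Phi \<omega>) (Bm j)"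
          using Dmono that calculation(1) by auto
        ultimately have False by simp }
      then show ?thesis by auto
    qed
    then show "D i \<inter> D j = {}" using \<open>i \<noteq> j\<close> by (metis Int_commute linorder_neqE_nat)
  qed
  have Dsums: "(\<lambda>m. prob (D m)) sums prob (\<Union>m. D m)"
    by (rule finite_measure_UNION) (use Dsets disjD in auto)
  have q01: "0 < q" "q < 1" unfolding q_def using s0 h0 by auto
  have gnn: "0 \<le> g"
  proof -
    have "prob (evt (B3 0) {2..}) = g" using ev_ge2[of "B3 0"] bb volB3 by (simp add: g_def)
    then show ?thesis by (metis measure_nonneg)
  qed
  have qsums: "(\<lambda>m. q^m * g) sums (g / (1 - q))"
    using sums_mult2[OF geometric_sums[of q], of g] q01 by (simp add: divide_inverse mult.commute)
  have bsums: "(\<lambda>m. (1-s)^n * prob (D m) + q^m * g) sums ((1-s)^n * prob (\<Union>m. D m) + g / (1-q))"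
    by (intro sums_add sums_mult Dsums qsums)
  have Gsum: "summable (\<lambda>m. prob (G m))"
    by (rule summable_comparison_test'[OF sums_summable[OF bsums], of 0]) (use Gp in auto)
  have "prob (\<Union>m. G m) \<le> (\<Sum>m. prob (G m))"
    by (rule finite_measure_subadditive_countably) (use Gsets Gsum in auto)
  also have "\<dots> \<le> (1-s)^n * prob (\<Union>m. D m) + g / (1-q)"
    using sums_le[OF _ summable_sums[OF Gsum] bsums] Gp by auto
  also have "\<dots> \<le> (1-s)^n + g / (1-q)"
    using s1 by (simp add: mult_left_le)
  finally have UG: "prob (\<Union>m. G m) \<le> (1-s)^n + g / (1-q)" .
  have cover: "\<omega> \<in> (\<Union>m. G m)"
    if w: "\<omega> \<in> space M" "ordered_labelling (Phi \<omega>) (\<lambda>k. x k \<omega>)" "s * norm (x L \<omega>)^2 \<le> norm (x 1 \<omega>)^2" for \<omega>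
  proof -
    define RL where "RL = norm (x L \<omega>)"
    define R1 where "R1 = norm (x 1 \<omega>)"
    define U where "U = lam * pi * RL^2"
    have U0: "U \<ge> 0" unfolding U_def using lam_pos by simp
    define m where "m = nat \<lfloor>U / h\<rfloor>"
    have mU: "real m \<le> U / h" "U / h < real m + 1"
      unfolding m_def using U0 h0 by (auto simp: of_nat_nat)
    then have mh: "real m * h \<le> U" "U < real (Suc m) * h" using h0 by (auto simp: field_simps)
    have radU: "rad lam U = RL" unfolding rad_def U_def RL_def using lam_pos by simp
    have "\<rho> m \<le> RL" unfolding \<rho>_def radU[symmetric] using lam_pos mh by (intro rad_mono) auto
    have "RL < \<rho> (Suc m)" unfolding \<rho>_def radU[symmetric] using lam_pos mh by (intro rad_less) auto
    have "\<sigma> m \<le> R1"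
    proof -
      have "s * (real m * h) / (lam * pi) \<le> s * U / (lam * pi)"
        using mh s0 lam_pos by (intro divide_right_mono mult_left_mono) auto
      also have "\<dots> = s * RL^2" unfolding U_def using lam_pos by simp
      also have "\<dots> \<le> R1^2" using w(3) unfolding RL_def R1_def .
      finally have "\<sigma> m \<le> sqrt (R1^2)" unfolding \<sigma>_def rad_def by (intro real_sqrt_le_mono)
      then show ?thesis unfolding R1_def by simp
    qed
    have c1: "pcount (Phi \<omega>) (B1 m) = 0"
    proof -
      have "Phi \<omega> \<inter> B1 m = {}"
      proof (rule ccontr)
        assume "Phi \<omega> \<inter> B1 m \<noteq> {}"
        then obtain y where "y \<in> Phi \<omega>" "norm y < \<sigma> m" unfolding B1_def by (auto simp: dist_norm)
        then show False using ol_norm_ge1[OF w(2)] \<open>\<sigma> m \<le> R1\<close> unfolding R1_def by force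
      qed
      then show ?thesis unfolding pcount_def by simp
    qed
    have c2: "pcount (Phi \<omega>) (Bm m) \<le> n"
      unfolding pcount_def Bm_def n_def
      using ol_count_le[OF w(2), of L "\<rho> m"] L2 \<open>\<rho> m \<le> RL\<close> unfolding RL_def by simp
    have c3: "n + 1 \<le> pcount (Phi \<omega>) (Bm (Suc m))"
      unfolding pcount_def Bm_def nL[symmetric]
      using ol_count_ge[OF w(2), of L "\<rho> (Suc m)"] L2 \<open>RL < \<rho> (Suc m)\<close> cnt_finite[OF w(1)] bb(1)[of "Suc m"]
      unfolding RL_def Bm_def by simp
    have "\<omega> \<in> G m" unfolding G_def using w(1) c1 c2 c3 by auto
    then show ?thesis by auto
  qed
  have [measurable]: "x k \<in> borel_measurable M" for k by (rule xm)
  have "prob {\<omega>\<in>space M. s * norm (x L \<omega>)^2 \<le> norm (x 1 \<omega>)^2} \<le> prob (\<Union>m. G m)"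
  proof (rule finite_measure_mono_AE)
    show "(\<Union>m. G m) \<in> events" using Gsets by auto
    show "AE \<omega> in M. \<omega> \<in> {\<omega> \<in> space M. s * (norm (x L \<omega>))\<^sup>2 \<le> (norm (x 1 \<omega>))\<^sup>2} \<longrightarrow> \<omega> \<in> (\<Union>m. G m)"
      using ae by eventually_elim (use cover in auto)
  qed
  with UG show ?thesis unfolding g_def q_def n_def by simp
qed

end



lemma lim_g: assumes "(s::real) > 0"
  shows "((\<lambda>h. (1 - exp (-h) - h * exp (-h)) / (1 - exp (-(s*h)))) \<longlongrightarrow> 0) (at_right 0)"
  using assms by real_asymp

context ppp
begin

lemma key_bound_lim:
  fixes x :: "nat \<Rightarrow> 'w \<Rightarrow> real^2" and L :: nat and s :: real
  assumes L2: "L \<ge> 2" and s0: "0 < s" and s1: "s < 1"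
    and xm: "\<And>k. x k \<in> borel_measurable M"
    and ae: "AE \<omega> in M. ordered_labelling (Phi \<omega>) (\<lambda>k. x k \<omega>)"
  shows "prob {\<omega>\<in>space M. s * norm (x L \<omega>)^2 \<le> norm (x 1 \<omega>)^2} \<le> (1-s)^(L-1)"
proof -
  have lim: "((\<lambda>h. (1-s)^(L-1) + (1 - exp (-h) - h * exp (-h)) / (1 - exp (-(s*h)))) \<longlongrightarrow> (1-s)^(L-1) + 0) (at_right 0)"
    by (intro tendsto_add tendsto_const lim_g s0)
  have ev: "eventually (\<lambda>h. prob {\<omega>\<in>space M. s * norm (x L \<omega>)^2 \<le> norm (x 1 \<omega>)^2}
      \<le> (1-s)^(L-1) + (1 - exp (-h) - h * exp (-h)) / (1 - exp (-(s*h)))) (at_right 0)"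
    using eventually_at_right_less[of "0::real"]
    by eventually_elim (rule key_bound[OF L2 s0 s1 _ xm ae], simp)
  show ?thesis using tendsto_le[OF trivial_limit_at_right_real lim tendsto_const ev] by simp
qed

end



lemma pois_mean_sums: "(\<lambda>k. real k * pois mu k) sums mu"
proof -
  have e: "(\<lambda>k. mu^k / fact k) sums exp mu"
    using exp_converges[of mu] by (simp add: divide_inverse mult.commute scaleR_conv_of_real)
  have "(\<lambda>k. real (Suc k) * pois mu (Suc k)) = (\<lambda>k. (mu * exp (-mu)) * (mu^k / fact k))"
  proof (rule ext)
    fix k
    have f: "(fact (Suc k) :: real) = real (Suc k) * fact k" by simp
    have nz: "real (Suc k) \<noteq> 0" "(fact k :: real) \<noteq> 0" by auto
    have "real (Suc k) * pois mu (Suc k) = (real (Suc k) / real (Suc k)) * (mu * exp (-mu)) * (mu^k / fact k)"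
      unfolding pois_def f power_Suc by (simp only: times_divide_eq_right divide_divide_eq_left mult_ac)
    also have "\<dots> = (mu * exp (-mu)) * (mu^k / fact k)" using nz by simp
    finally show "real (Suc k) * pois mu (Suc k) = (mu * exp (-mu)) * (mu^k / fact k)" .
  qed
  moreover have "(\<lambda>k. (mu * exp (-mu)) * (mu^k / fact k)) sums ((mu * exp (-mu)) * exp mu)"
    by (rule sums_mult[OF e])
  ultimately have "(\<lambda>k. real (Suc k) * pois mu (Suc k)) sums mu"
    by (simp add: mult.assoc exp_minus field_simps)
  then show ?thesis using sums_Suc_iff[of "\<lambda>k. real k * pois mu k" mu] by simp
qed

lemma pois_nonneg: "mu \<ge> 0 \<Longrightarrow> pois mu k \<ge> 0"
  unfolding pois_def by simp

context ppp
begin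

lemma markov:
  assumes B: "B \<in> sets borel" "bounded B" and t: "t > 0"
  shows "prob (evt B {t..}) \<le> lam * measure lborel B / real t"
proof -
  define mu where "mu = lam * measure lborel B"
  have mu0: "mu \<ge> 0" unfolding mu_def using lam_pos by simp
  define A where "A k = evt B {k + t}" for k
  have "(\<lambda>k. prob (A k)) sums prob (\<Union>k. A k)"
    by (rule finite_measure_UNION) (auto simp: A_def disjoint_family_on_def intro: ppp_count(1)[OF PPP B])
  moreover have "(\<Union>k. A k) = evt B {t..}" unfolding A_def by (auto intro: le_Suc_ex) (metis add.commute le_add_diff_inverse)
  moreover have "prob (A k) = pois mu (k + t)" for k unfolding A_def mu_def by (rule ev_single[OF B])
  ultimately have s1: "(\<lambda>k. pois mu (k + t)) sums prob (evt B {t..})" by simp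
  have s2: "(\<lambda>k. real (k + t) * pois mu (k + t)) sums (mu - (\<Sum>i<t. real i * pois mu i))"
    using sums_split_initial_segment[OF pois_mean_sums[of mu], of t] by simp
  have s3: "(\<lambda>k. real t * pois mu (k + t)) sums (real t * prob (evt B {t..}))" by (rule sums_mult[OF s1])
  have "real t * prob (evt B {t..}) \<le> mu - (\<Sum>i<t. real i * pois mu i)"
    by (rule sums_le[OF _ s3 s2]) (intro mult_right_mono pois_nonneg mu0; simp)
  also have "\<dots> \<le> mu" using pois_nonneg[OF mu0] by (simp add: sum_nonneg)
  finally show ?thesis using t unfolding mu_def by (simp add: field_simps)
qed

end



lemma two_powr_log: assumes "b > 0" "(j::real) > 0"
  shows "2 powr (log (2 powr b) j) = j powr (1/b)"
proof -
  have "log (2 powr b) j * ln 2 = ln j / b" unfolding log_def using assms by simp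
  then show ?thesis using assms unfolding powr_def by (simp add: mult.commute)
qed

lemma summable_from_counts:
  fixes xs :: "nat \<Rightarrow> real^2" and b \<alpha> :: real and K :: nat and S :: "(real^2) set"
  assumes ol: "ordered_labelling S xs" and b: "b > 0" and ab: "\<alpha> > b"
    and cnt: "\<And>k. k \<ge> K \<Longrightarrow> real (card (S \<inter> ball 0 (2^k))) < (2 powr b)^k"
    and fin: "\<And>r. finite (S \<inter> ball 0 r)"
  shows "summable (\<lambda>j. norm (xs j) powr (-\<alpha>))"
proof -
  define c where "c = (2::real) powr b"
  have c1: "c > 1" unfolding c_def using powr_less_mono[of 0 b 2] b by simp
  have key: "2^k \<le> norm (xs j)" if j: "j \<ge> 1" "k \<ge> K" "c^k \<le> real j" for j k
  proof (rule ccontr)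
    assume "\<not> 2^k \<le> norm (xs j)"
    then have "j \<le> card (S \<inter> ball 0 (2^k))" using ol_count_ge[OF ol j(1) _ fin] by simp
    then show False using cnt[OF j(2)] j(3) unfolding c_def by simp
  qed
  define N where "N = max 1 (nat \<lceil>c^K\<rceil>)"
  have bound: "norm (norm (xs j) powr (-\<alpha>)) \<le> 2 powr \<alpha> * real j powr (-(\<alpha>/b))" if jN: "j \<ge> N" for j
  proof -
    have j1: "j \<ge> 1" using jN unfolding N_def by simp
    have jK: "c^K \<le> real j" using jN unfolding N_def by (meson le_nat_iff max.boundedE of_nat_le_iff real_nat_ceiling_ge order_trans ceiling_le_iff order_refl nat_le_iff le_of_int_ceiling) 
    have jpos: "real j > 0" using j1 by simp
    define k where "k = nat \<lfloor>log c j\<rfloor>"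
    have "K \<le> log c j" using jK c1 jpos by (simp add: le_log_iff powr_realpow)
    then have kK: "k \<ge> K" unfolding k_def by (simp add: le_nat_iff le_floor_iff)
    have lg0: "log c j \<ge> 0" using \<open>K \<le> log c j\<close> by linarith
    have kr: "real k \<le> log c j" "log c j < real k + 1" unfolding k_def using lg0 by (auto simp: of_nat_nat)
    have "c^k \<le> real j" using kr(1) c1 jpos by (simp add: le_log_iff powr_realpow)
    then have le: "2^k \<le> norm (xs j)" using key[OF j1 kK] by simp
    have "real j powr (1/b) = 2 powr (log c j)" unfolding c_def using two_powr_log b jpos by simp
    also have "\<dots> < 2 powr (real k + 1)" using kr(2) by (intro powr_less_mono) auto
    also have "\<dots> = 2 * 2^k" by (simp add: powr_add powr_realpow)
    finally have lo: "real j powr (1/b) / 2 \<le> norm (xs j)" using le by simp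
    have "norm (norm (xs j) powr (-\<alpha>)) = norm (xs j) powr (-\<alpha>)" by simp
    also have "\<dots> \<le> (real j powr (1/b) / 2) powr (-\<alpha>)"
      using lo ab b jpos by (intro powr_mono2') auto
    also have "\<dots> = 2 powr \<alpha> * real j powr (-(\<alpha>/b))"
      using b by (simp add: powr_divide powr_powr powr_minus_divide divide_simps)
    finally show ?thesis .
  qed
  have "summable (\<lambda>j. real j powr (-(\<alpha>/b)))" using ab b by (simp add: summable_real_powr_iff field_simps)
  then have "summable (\<lambda>j. 2 powr \<alpha> * real j powr (-(\<alpha>/b)))" by (rule summable_mult)
  then show ?thesis by (rule summable_comparison_test'[of _ N]) (use bound in auto)
qed

context ppp
begin

lemma ae_counts:
  assumes b: "b > 2"
  shows "AE \<omega> in M. \<exists>K. \<forall>k\<ge>K. real (pcount (Phi \<omega>) (ball 0 (2^k))) < (2 powr b)^k"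
proof -
  define c where "c = (2::real) powr b"
  have c4: "c > 4" unfolding c_def using powr_less_mono[of 2 b 2] b by simp
  define A where "A k = evt (ball 0 (2^k)) {nat \<lceil>c^k\<rceil>..}" for k :: nat
  have Asets: "A k \<in> events" for k unfolding A_def by (rule ev_sets) auto
  have Ab: "prob (A k) \<le> lam * pi * (4 / c)^k" for k
  proof -
    have cpos: "c^k > 0" using c4 by simp
    have t: "nat \<lceil>c^k\<rceil> > 0" using cpos by simp
    have "prob (A k) \<le> lam * measure lborel (ball (0::real^2) (2^k)) / real (nat \<lceil>c^k\<rceil>)"
      unfolding A_def by (rule markov[OF _ _ t]) auto
    also have "\<dots> = lam * pi * 4^k / real (nat \<lceil>c^k\<rceil>)"
    proof -
      have "((2::real)^k)^2 = 4^k" by (simp add: power2_eq_square power_mult_distrib[symmetric])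
      then show ?thesis by (simp add: vol_ball mult.assoc)
    qed
    also have "\<dots> \<le> lam * pi * 4^k / c^k"
      using cpos lam_pos by (intro divide_left_mono) (auto simp: real_nat_ceiling_ge)
    also have "\<dots> = lam * pi * (4/c)^k" by (simp add: power_divide)
    finally show ?thesis .
  qed
  have "summable (\<lambda>k. lam * pi * (4/c)^k)" using c4 by (intro summable_mult summable_geometric) auto
  then have sA: "summable (\<lambda>k. measure M (A k))"
    by (rule summable_comparison_test'[of _ 0]) (use Ab in auto)
  have "AE \<omega> in M. eventually (\<lambda>k. \<omega> \<in> space M - A k) sequentially"
    by (rule borel_cantelli_AE1) (use Asets sA in \<open>auto simp: emeasure_eq_measure\<close>)
  then show ?thesis
  proof eventually_elim
    case (elim \<omega>)
    then obtain K where K: "\<And>k. k \<ge> K \<Longrightarrow> \<omega> \<in> space M - A k" unfolding eventually_sequentially by auto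
    have "real (pcount (Phi \<omega>) (ball 0 (2^k))) < (2 powr b)^k" if "k \<ge> K" for k
    proof -
      have "real (pcount (Phi \<omega>) (ball 0 (2^k))) < c^k" using K[OF that] unfolding A_def by auto
      then show ?thesis unfolding c_def by simp
    qed
    then show ?case by blast
  qed
qed

lemma ae_summable:
  fixes x :: "nat \<Rightarrow> 'w \<Rightarrow> real^2" and \<alpha> :: real
  assumes a2: "\<alpha> > 2" and ae: "AE \<omega> in M. ordered_labelling (Phi \<omega>) (\<lambda>k. x k \<omega>)"
  shows "AE \<omega> in M. summable (\<lambda>j. norm (x j \<omega>) powr (-\<alpha>))"
proof -
  define b where "b = (\<alpha> + 2) / 2"
  have b: "b > 2" "\<alpha> > b" unfolding b_def using a2 by auto
  show ?thesis using ae ae_counts[OF b(1)] AE_space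
  proof eventually_elim
    case (elim \<omega>)
    then obtain K where K: "\<And>k. k \<ge> K \<Longrightarrow> real (pcount (Phi \<omega>) (ball 0 (2^k))) < (2 powr b)^k" by auto
    show ?case
      by (rule summable_from_counts[OF elim(1), of b \<alpha> K]) (use b K elim(3) cnt_finite in \<open>auto simp: pcount_def\<close>)
  qed
qed

end



lemma sinr_det:
  fixes xs :: "nat \<Rightarrow> real^2" and S :: "(real^2) set"
  assumes ol: "ordered_labelling S xs" and z: "0 \<notin> S" and L2: "L \<ge> 2"
    and as: "\<forall>i\<in>{1..L}. as i" and summ: "summable (\<lambda>j. norm (xs j) powr (-\<alpha>))"
    and a0: "\<alpha> > 0" and P0: "P > 0" and s20: "\<sigma>2 \<ge> 0" and b0: "\<beta> > 0" and g0: "\<gamma> > 0"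
    and cond: "sinr P \<alpha> \<sigma>2 L xs as bs L \<ge> \<beta> / \<gamma>"
    and hs2: "\<gamma>/\<beta> - (real L - 2) > 0 \<Longrightarrow> s2 \<le> (\<gamma>/\<beta> - (real L - 2)) powr (-2/\<alpha>)"
  shows "\<gamma>/\<beta> - (real L - 2) > 0 \<and> s2 * norm (xs L)^2 \<le> norm (xs 1)^2"
proof -
  define t where "t i = norm (xs i) powr (-\<alpha>)" for i
  have Rpos: "norm (xs i) > 0" if "i \<ge> 1" for i
  proof -
    have "xs i \<in> S" using ol that unfolding ordered_labelling_def by auto
    then show ?thesis using z by (metis zero_less_norm_iff)
  qed
  have tpos: "t i > 0" if "i \<ge> 1" for i unfolding t_def using Rpos[OF that] by simp
  have tmono: "t L \<le> t i" if "1 \<le> i" "i \<le> L" for i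
  proof -
    have "norm (xs i) \<le> norm (xs L)" using ol that unfolding ordered_labelling_def by auto
    then show ?thesis unfolding t_def using a0 Rpos[OF that(1)] by (intro powr_mono2') auto
  qed
  define I where "I = (\<Sum>j. of_bool (bs (j + L + 1)) * P * norm (xs (j + L + 1)) powr (-\<alpha>))"
  have "summable (\<lambda>j. P * norm (xs (j + (L + 1))) powr (-\<alpha>))"
    using summable_mult[OF summable_ignore_initial_segment[OF summ, of "L+1"], of P] by simp
  then have "summable (\<lambda>j. of_bool (bs (j + L + 1)) * P * norm (xs (j + L + 1)) powr (-\<alpha>))"
    by (rule summable_comparison_test'[of _ 0]) (use P0 in \<open>auto simp: add.assoc\<close>)
  then have I0: "I \<ge> 0" unfolding I_def by (rule suminf_nonneg) (use P0 in auto)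
  have Ssum: "(\<Sum>i\<in>{1..L} - {L}. of_bool (as i) * P * norm (xs i) powr (-\<alpha>)) = P * (\<Sum>i\<in>{1..<L}. t i)"
  proof -
    have e: "{1..L} - {L} = {1..<L}" by auto
    show ?thesis unfolding e t_def using as by (simp add: sum_distrib_left)
  qed
  have "(\<Sum>i\<in>{1..<L}. t i) = t 1 + (\<Sum>i\<in>{2..<L}. t i)"
  proof -
    have "{1..<L} = insert 1 {2..<L}" using L2 by auto
    then show ?thesis by simp
  qed
  moreover have "(\<Sum>i\<in>{2..<L}. t i) \<ge> (\<Sum>i\<in>{2..<L}. t L)" by (rule sum_mono) (use tmono in auto)
  moreover have "(\<Sum>i\<in>{2..<L}. t L) = (real L - 2) * t L" using L2 by (simp add: of_nat_diff)
  ultimately have sumge: "(\<Sum>i\<in>{1..<L}. t i) \<ge> t 1 + (real L - 2) * t L" by linarith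
  define D where "D = P * (\<Sum>i\<in>{1..<L}. t i) + I + \<sigma>2"
  have "P * (t 1 + (real L - 2) * t L) \<le> P * (\<Sum>i\<in>{1..<L}. t i)"
    using sumge P0 by (intro mult_left_mono) auto
  then have Dge: "D \<ge> P * (t 1 + (real L - 2) * t L)" unfolding D_def using I0 s20 by linarith
  have tL: "t L > 0" "t 1 > 0" using tpos L2 by auto
  have "(real L - 2) * t L \<ge> 0" using L2 tL by (intro mult_nonneg_nonneg) auto
  then have "t 1 + (real L - 2) * t L > 0" using tL by linarith
  then have "P * (t 1 + (real L - 2) * t L) > 0" using P0 by (intro mult_pos_pos)
  then have Dpos: "D > 0" using Dge by linarith
  have "sinr P \<alpha> \<sigma>2 L xs as bs L = P * t L / D"
    unfolding sinr_def D_def Ssum[symmetric] I_def t_def by simp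
  with cond have "\<beta> / \<gamma> \<le> P * t L / D" by simp
  then have "\<beta> / \<gamma> * D \<le> P * t L" using Dpos by (simp add: pos_le_divide_eq)
  then have "\<beta> * D / \<gamma> \<le> P * t L" by simp
  then have "\<beta> * D \<le> \<gamma> * (P * t L)" using g0 by (simp add: pos_divide_le_eq mult.commute)
  moreover have "\<beta> * (P * (t 1 + (real L - 2) * t L)) \<le> \<beta> * D"
    using Dge b0 by (intro mult_left_mono) auto
  ultimately have "\<beta> * (P * (t 1 + (real L - 2) * t L)) \<le> \<gamma> * (P * t L)" by linarith
  then have "P * (\<beta> * (t 1 + (real L - 2) * t L)) \<le> P * (\<gamma> * t L)" by (simp only: mult.left_commute)
  then have "\<beta> * (t 1 + (real L - 2) * t L) \<le> \<gamma> * t L" using P0 by (simp only: mult_le_cancel_left_pos)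
  then have key: "t 1 \<le> (\<gamma>/\<beta> - (real L - 2)) * t L" using b0 by (simp add: field_simps)
  define c where "c = \<gamma>/\<beta> - (real L - 2)"
  have "c * t L > 0" using key tL unfolding c_def by linarith
  then have cpos: "c > 0" using tL by (simp add: zero_less_mult_iff)
  have R1: "norm (xs 1) > 0" "norm (xs L) > 0" using Rpos L2 by auto
  have "(c * t L) powr (-2/\<alpha>) \<le> (t 1) powr (-2/\<alpha>)"
    using key tL a0 unfolding c_def by (intro powr_mono2') auto
  also have "(t 1) powr (-2/\<alpha>) = norm (xs 1)^2"
  proof -
    have "(t 1) powr (-2/\<alpha>) = norm (xs 1) powr (-\<alpha> * (-2/\<alpha>))" unfolding t_def by (simp only: powr_powr)
    also have "-\<alpha> * (-2/\<alpha>) = 2" using a0 by simp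
    finally show ?thesis by (simp add: powr_numeral)
  qed
  also have "(c * t L) powr (-2/\<alpha>) = c powr (-2/\<alpha>) * norm (xs L)^2"
  proof -
    have "(c * t L) powr (-2/\<alpha>) = c powr (-2/\<alpha>) * (t L) powr (-2/\<alpha>)"
      using cpos tL by (intro powr_mult)
    also have "(t L) powr (-2/\<alpha>) = norm (xs L) powr (-\<alpha> * (-2/\<alpha>))" unfolding t_def by (simp only: powr_powr)
    also have "-\<alpha> * (-2/\<alpha>) = 2" using a0 by simp
    finally show ?thesis by (simp add: powr_numeral)
  qed
  finally have "c powr (-2/\<alpha>) * norm (xs L)^2 \<le> norm (xs 1)^2" .
  moreover have "s2 \<le> c powr (-2/\<alpha>)" using hs2 cpos unfolding c_def by simp
  ultimately have "s2 * norm (xs L)^2 \<le> norm (xs 1)^2"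
    by (meson mult_right_mono zero_le_power2 order_trans)
  then show ?thesis using cpos unfolding c_def by simp
qed




theorem corollary2:
  fixes M :: "'w measure" and Phi :: "'w \<Rightarrow> (real^2) set" and lam :: real
    and x :: "nat \<Rightarrow> 'w \<Rightarrow> real^2" and a b :: "nat \<Rightarrow> 'w \<Rightarrow> bool"
    and L :: nat and \<alpha> P \<sigma>2 \<gamma> \<beta> p q Pstar :: real
  assumes "prob_space M"
    and "lam > 0"
    and "PPP M Phi lam"
    and "\<And>k. x k \<in> borel_measurable M"
    and "AE \<omega> in M. ordered_labelling (Phi \<omega>) (\<lambda>k. x k \<omega>)"
    and "L \<ge> 2" and "\<alpha> > 2" and "P > 0" and "\<sigma>2 \<ge> 0" and "\<gamma> > 0" and "\<beta> > 0"
    and "p = 1" and "0 \<le> q" and "q \<le> 1"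
    and "\<And>i. i \<in> {1..L} \<Longrightarrow> {\<omega>\<in>space M. a i \<omega>} \<in> sets M \<and> measure M {\<omega>\<in>space M. a i \<omega>} = p"
    and "\<And>j. j > L \<Longrightarrow> {\<omega>\<in>space M. b j \<omega>} \<in> sets M \<and> measure M {\<omega>\<in>space M. b j \<omega>} = q"
    and "prob_space.indep_sets M
           (\<lambda>t. case t of
                  None \<Rightarrow> phi_sigma M Phi
                | Some (Inl i) \<Rightarrow> sigma_sets (space M) {{\<omega>\<in>space M. a i \<omega>}}
                | Some (Inr j) \<Rightarrow> sigma_sets (space M) {{\<omega>\<in>space M. b j \<omega>}})
           (insert None (Some ` (Inl ` {1..L} \<union> Inr ` {L<..})))"
    and "0 < Pstar" and "Pstar < 1"
    and "PL M x a b P \<alpha> \<sigma>2 \<gamma> \<beta> L \<ge> Pstar"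
  shows "\<gamma> \<ge> \<beta> * ((1 - Pstar powr (1 / (real L - 1))) powr (- \<alpha> / 2) + real L - 2)"
proof -
  note prob = assms(1)
  interpret ppp M Phi lam by (intro ppp.intro ppp_axioms.intro) (use assms in auto)
  have L2: "L \<ge> 2" and a2: "\<alpha> > 2" and P0: "P > 0" and s20: "\<sigma>2 \<ge> 0" and g0: "\<gamma> > 0" and b0: "\<beta> > 0"
    using assms by auto
  have xm: "\<And>k. x k \<in> borel_measurable M" and ae: "AE \<omega> in M. ordered_labelling (Phi \<omega>) (\<lambda>k. x k \<omega>)"
    using assms by auto
  have Ps: "0 < Pstar" "Pstar < 1" "PL M x a b P \<alpha> \<sigma>2 \<gamma> \<beta> L \<ge> Pstar" using assms by auto
  define n where "n = L - 1"
  have n0: "n > 0" "real L - 1 = real n" using L2 unfolding n_def by (auto simp: of_nat_diff)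
  define Pn where "Pn = Pstar powr (1 / (real L - 1))"
  have Pn: "0 < Pn" "Pn < 1" unfolding Pn_def using Ps n0
    by (auto intro!: order.strict_trans2[OF powr_less_mono2[of _ Pstar 1]])
  have Pnn: "Pn ^ n = Pstar"
  proof -
    have "Pn ^ n = Pn powr (real n)" using Pn by (simp add: powr_realpow)
    also have "\<dots> = Pstar powr (1 / real n * real n)" unfolding Pn_def n0(2) by (simp add: powr_powr)
    also have "\<dots> = Pstar" using n0 Ps by simp
    finally show ?thesis .
  qed
  define s0 where "s0 = 1 - Pn"
  have s0: "0 < s0" "s0 < 1" unfolding s0_def using Pn by auto
  show ?thesis
  proof (rule ccontr)
    assume "\<not> ?thesis"
    then have lt: "\<gamma> < \<beta> * (s0 powr (- \<alpha> / 2) + real L - 2)" unfolding s0_def Pn_def by simp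
    define c where "c = \<gamma>/\<beta> - (real L - 2)"
    have clt: "c < s0 powr (- \<alpha> / 2)" using lt b0 unfolding c_def by (simp add: field_simps)
    define s2 where "s2 = (if c > 0 then min (c powr (-2/\<alpha>)) ((1+s0)/2) else (1+s0)/2)"
    have s2: "s0 < s2" "s2 < 1" "0 < s2"
    proof -
      have "c > 0 \<Longrightarrow> s0 < c powr (-2/\<alpha>)"
      proof -
        assume "c > 0"
        then have "(s0 powr (- \<alpha> / 2)) powr (-2/\<alpha>) < c powr (-2/\<alpha>)"
          using clt a2 by (intro powr_less_mono2_neg) auto
        also have "(s0 powr (- \<alpha> / 2)) powr (-2/\<alpha>) = s0" using a2 s0 by (simp add: powr_powr)
        finally show ?thesis .
      qed
      then show "s0 < s2" "s2 < 1" "0 < s2" unfolding s2_def using s0 by (auto simp: min_less_iff_disj)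
    qed
    have hs2: "\<gamma>/\<beta> - (real L - 2) > 0 \<Longrightarrow> s2 \<le> (\<gamma>/\<beta> - (real L - 2)) powr (-2/\<alpha>)"
      unfolding s2_def c_def by simp
    have small: "(1 - s2)^n < Pstar"
    proof -
      have "(1 - s2)^n < (1 - s0)^n" using s2 n0 by (intro power_strict_mono) auto
      then show ?thesis unfolding s0_def using Pnn by simp
    qed
    define E where "E = {\<omega>\<in>space M. s2 * norm (x L \<omega>)^2 \<le> norm (x 1 \<omega>)^2}"
    have [measurable]: "x k \<in> borel_measurable M" for k by (rule xm)
    have Esets: "E \<in> events" unfolding E_def by measurable
    have probE: "prob E \<le> (1 - s2)^n"
      unfolding E_def n_def by (rule key_bound_lim[OF L2 s2(3) s2(2) xm ae])
    have AEz: "AE \<omega> in M. 0 \<notin> Phi \<omega>"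
    proof -
      have bb: "{0::real^2} \<in> sets borel" "bounded {0::real^2}" by auto
      have "prob (evt {0} {0}) = 1" using ev_single[OF bb, of 0] by (simp add: pois_def)
      then have "AE \<omega> in M. \<omega> \<in> evt {0} {0}" by (rule AE_prob_1)
      then show ?thesis
      proof eventually_elim
        case (elim \<omega>)
        then have "finite (Phi \<omega> \<inter> {0})" "card (Phi \<omega> \<inter> {0}) = 0"
          using cnt_finite[OF _ bb] by (auto simp: pcount_def)
        then show ?case by auto
      qed
    qed
    have AEa: "AE \<omega> in M. \<forall>i\<in>{1..L}. a i \<omega>"
    proof (subst AE_ball_countable)
      show "countable {1..L}" by simp
      show "\<forall>i\<in>{1..L}. AE \<omega> in M. a i \<omega>"
      proof
        fix i assume i: "i \<in> {1..L}"
        have "prob {\<omega>\<in>space M. a i \<omega>} = 1" using assms(15)[OF i] assms(12) by simp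
        then have "AE \<omega> in M. \<omega> \<in> {\<omega>\<in>space M. a i \<omega>}" by (rule AE_prob_1)
        then show "AE \<omega> in M. a i \<omega>" by auto
      qed
    qed
    have AEs: "AE \<omega> in M. summable (\<lambda>j. norm (x j \<omega>) powr (-\<alpha>))" by (rule ae_summable[OF a2 ae])
    define f where "f \<omega> = (\<Prod>k\<in>{1..L}.
        of_bool (sinr P \<alpha> \<sigma>2 L (\<lambda>i. x i \<omega>) (\<lambda>i. a i \<omega>) (\<lambda>j. b j \<omega>) k \<ge> \<beta> / \<gamma>) :: real)" for \<omega>
    have AEf: "AE \<omega> in M. f \<omega> \<le> indicator E \<omega>"
      using ae AEz AEa AEs AE_space
    proof eventually_elim
      case (elim \<omega>)
      show ?case
      proof (cases "sinr P \<alpha> \<sigma>2 L (\<lambda>i. x i \<omega>) (\<lambda>i. a i \<omega>) (\<lambda>j. b j \<omega>) L \<ge> \<beta> / \<gamma>")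
        case True
        have "s2 * norm (x L \<omega>)^2 \<le> norm (x 1 \<omega>)^2"
          using sinr_det[OF elim(1) elim(2) L2 elim(3) elim(4) _ P0 s20 b0 g0 True hs2] a2 by simp
        then have "\<omega> \<in> E" unfolding E_def using elim(5) by simp
        moreover have "f \<omega> \<le> 1" unfolding f_def by (intro prod_le_1) auto
        ultimately show ?thesis by simp
      next
        case False
        have "f \<omega> = 0" unfolding f_def using False L2 by (intro prod_zero bexI[of _ L]) auto
        then show ?thesis by simp
      qed
    qed
    have PLf: "PL M x a b P \<alpha> \<sigma>2 \<gamma> \<beta> L = integral\<^sup>L M f" unfolding PL_def f_def by simp
    have "integral\<^sup>L M f \<le> prob E"
    proof (cases "integrable M f")
      case True
      have "integral\<^sup>L M f \<le> integral\<^sup>L M (indicator E)"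
        by (rule integral_mono_AE[OF True _ AEf]) (use Esets in \<open>auto simp: emeasure_eq_measure\<close>)
      then show ?thesis using Esets by simp
    next
      case False
      then show ?thesis by (simp add: not_integrable_integral_eq)
    qed
    then have "Pstar \<le> (1 - s2)^n" using Ps(3) PLf probE by linarith
    then show False using small by simp
  qed
qed


end
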